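(* For every forest $T$ and every integer $k\geq 3$, $\sigma(T)=\tau_1(T^{(k)})$. Equivalently, $\sigma(T)$ is the minimum size of a set $Y$ such that $T^{(k)}$ is isomorphic to a subhypergraph of $\{\{y\}\cup Z': y\in Y,\ Z'\subseteq Z,\ |Z'|=k-1\}$ for some set $Z$ disjoint from $Y$.
   Context: For a graph $H$ and integer $k\geq 2$, the $k$-expansion $H^{(k)}$ is the $k$-uniform hypergraph obtained by replacing each edge $xy$ of $H$ by a $k$-set $E_{xy}$ consisting of $x,y$ and $k-2$ new vertices, where the sets $E_{xy}\setminus\{x,y\}$ are pairwise disjoint for distinct edges and disjoint from $V(H)$. For a forest $T$, $\sigma(T):=\min\{|X|+e(T\setminus X): X\subseteq V(T)\text{ independent in }T\}$, where $T\setminus X$ is obtained by deleting the vertices of $X$ and all incident edges and $e(\cdot)$ counts edges. A set $Y$ is a 1-cross-cut of a family $\mathcal C$ of sets if $|Y\cap E|=1$ for every $E\in\mathcal C$; $\tau_1(\mathcal C)$ is the minimum size of a 1-cross-cut of $\mathcal C$ (and $\infty$ if none exists). *)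

theory Defs
  imports Main "HOL-Library.Extended_Nat"
begin

definition simple_graph :: "'a set \<Rightarrow> 'a set set \<Rightarrow> bool" where
  "simple_graph V E \<longleftrightarrow> finite V \<and> (\<forall>e\<in>E. e \<subseteq> V \<and> card e = 2)"

definition is_cycle :: "'a set set \<Rightarrow> 'a list \<Rightarrow> bool" where
  "is_cycle E vs \<longleftrightarrow> length vs \<ge> 3 \<and> distinct vs \<and>
     (\<forall>i < length vs. {vs ! i, vs ! ((i + 1) mod length vs)} \<in> E)"

definition forest :: "'a set \<Rightarrow> 'a set set \<Rightarrow> bool" where
  "forest V E \<longleftrightarrow> simple_graph V E \<and> \<not> (\<exists>vs. set vs \<subseteq> V \<and> is_cycle E vs)"

definition independent :: "'a set set \<Rightarrow> 'a set \<Rightarrow> bool" where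
  "independent E X \<longleftrightarrow> (\<forall>e\<in>E. \<not> e \<subseteq> X)"

definition edges_del :: "'a set set \<Rightarrow> 'a set \<Rightarrow> nat" where
  "edges_del E X = card {e \<in> E. e \<inter> X = {}}"

definition sigma :: "'a set \<Rightarrow> 'a set set \<Rightarrow> nat" where
  "sigma V E = Min ((\<lambda>X. card X + edges_del E X) ` {X. X \<subseteq> V \<and> independent E X})"

definition expansion_edge :: "nat \<Rightarrow> 'a set \<Rightarrow> ('a + ('a set \<times> nat)) set" where
  "expansion_edge k e = Inl ` e \<union> {Inr (e, i) | i. i < k - 2}"

definition expansion :: "nat \<Rightarrow> 'a set set \<Rightarrow> ('a + ('a set \<times> nat)) set set" where
  "expansion k E = expansion_edge k ` E"

text \<open>1-cross-cut and tau_1 (infinity if none exists).\<close>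
definition one_cross_cut :: "'b set set \<Rightarrow> 'b set \<Rightarrow> bool" where
  "one_cross_cut C Y \<longleftrightarrow> (\<forall>E\<in>C. card (Y \<inter> E) = 1)"

definition tau1 :: "'b set set \<Rightarrow> enat" where
  "tau1 C = (INF Y \<in> {Y. finite Y \<and> one_cross_cut C Y}. enat (card Y))"

end

theory Submission
  imports Defs
begin

lemma card_Y_split:
  assumes "finite (Y :: ('a + 'b) set)"
  shows "card Y = card (Inl -` Y) + card (Inr -` Y)"
proof -
  have fa: "finite (Inl -` Y)" "finite (Inr -` Y)"
    using assms by (auto intro: finite_vimageI simp: inj_on_def)
  have "Y = Inl ` (Inl -` Y) \<union> Inr ` (Inr -` Y)"
  proof
    show "Y \<subseteq> Inl ` (Inl -` Y) \<union> Inr ` (Inr -` Y)"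
    proof
      fix y assume "y \<in> Y" thus "y \<in> Inl ` (Inl -` Y) \<union> Inr ` (Inr -` Y)"
        by (cases y) auto
    qed
  qed auto
  hence "card Y = card (Inl ` (Inl -` Y) \<union> Inr ` (Inr -` Y))" by simp
  also have "\<dots> = card (Inl ` (Inl -` Y) :: ('a + 'b) set) + card (Inr ` (Inr -` Y) :: ('a + 'b) set)"
    using fa assms by (intro card_Un_disjoint) auto
  also have "\<dots> = card (Inl -` Y) + card (Inr -` Y)"
    by (simp only: card_image inj_Inl inj_Inr inj_on_subset subset_UNIV)
  finally show ?thesis .
qed

theorem mainTheorem5:
  fixes V :: "'a set" and E :: "'a set set" and k :: nat
  assumes "forest V E" and "k \<ge> 3"
  shows "tau1 (expansion k E) = enat (sigma V E)"
proof -
  have finV: "finite V" and Esub: "\<And>e. e \<in> E \<Longrightarrow> e \<subseteq> V \<and> card e = 2"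
    using assms(1) unfolding forest_def simple_graph_def by auto
  have finE: "finite E" using Esub finV
    by (meson Pow_iff finite_Pow_iff rev_finite_subset subsetI)
  define D where "D = {X. X \<subseteq> V \<and> independent E X}"
  define f where "f = (\<lambda>X. card X + edges_del E X)"
  have finD: "finite D" unfolding D_def using finV by auto
  have "{} \<in> D" unfolding D_def independent_def using Esub by fastforce
  hence neD: "f ` D \<noteq> {}" by auto
  have sig: "sigma V E = Min (f ` D)" unfolding sigma_def D_def f_def by simp
  obtain X0 where X0: "X0 \<in> D" "f X0 = sigma V E"
    using Min_in[OF _ neD] finD sig by (metis finite_imageI imageE)
  have sig_le: "\<And>X. X \<in> D \<Longrightarrow> sigma V E \<le> f X"
    using sig finD by simp
  have k2: "0 < k - 2" using assms(2) by simp
  define A0 where "A0 = {e \<in> E. e \<inter> X0 = {}}"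
  define Y0 :: "('a + 'a set \<times> nat) set" where "Y0 = Inl ` X0 \<union> (\<lambda>e. Inr (e, 0::nat)) ` A0"
  have finX0: "finite X0" using X0(1) finV unfolding D_def by (auto intro: finite_subset)
  have finA0: "finite A0" using finE unfolding A0_def by simp
  have cardY0: "card Y0 = sigma V E"
  proof -
    have "card Y0 = card (Inl ` X0 :: ('a + 'a set \<times> nat) set) + card ((\<lambda>e. Inr (e, 0::nat)) ` A0 :: ('a + 'a set \<times> nat) set)"
      unfolding Y0_def using finX0 finA0 by (intro card_Un_disjoint) auto
    also have "\<dots> = card X0 + card A0"
      by (simp add: card_image inj_on_def)
    finally show ?thesis using X0(2) unfolding f_def edges_del_def A0_def by simp
  qed
  have finY0: "finite Y0" unfolding Y0_def using finX0 finA0 by simp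
  have cut0: "one_cross_cut (expansion k E) Y0"
    unfolding one_cross_cut_def expansion_def
  proof
    fix C assume "C \<in> expansion_edge k ` E"
    then obtain e where e: "e \<in> E" "C = expansion_edge k e" by auto
    have ind: "\<not> e \<subseteq> X0" using X0(1) e(1) unfolding D_def independent_def by auto
    have ce: "card e = 2" using Esub e(1) by auto
    have finE': "finite e" using ce by (metis card.infinite zero_neq_numeral)
    show "card (Y0 \<inter> C) = 1"
    proof (cases "e \<inter> X0 = {}")
      case True
      have "Y0 \<inter> C = {Inr (e, 0)}"
        using True e k2 unfolding Y0_def A0_def expansion_edge_def by auto
      thus ?thesis by simp
    next
      case False
      have eq: "Y0 \<inter> C = Inl ` (X0 \<inter> e)"
        using False e unfolding Y0_def A0_def expansion_edge_def by auto
      have "card (X0 \<inter> e) \<le> 2" using ce finE' by (metis card_mono inf_le2)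
      moreover have "card (X0 \<inter> e) \<noteq> 0" using False finE' by auto
      moreover have "card (X0 \<inter> e) \<noteq> 2"
        using ind ce finE' card_subset_eq[of e "X0 \<inter> e"] by auto
      ultimately have "card (X0 \<inter> e) = 1" by linarith
      thus ?thesis using eq by (simp add: card_image)
    qed
  qed
  have le1: "tau1 (expansion k E) \<le> enat (sigma V E)"
    unfolding tau1_def using finY0 cut0 cardY0
    by (metis (mono_tags, lifting) INF_lower mem_Collect_eq)
  have lb: "enat (sigma V E) \<le> enat (card Y)" if Y: "finite Y" "one_cross_cut (expansion k E) Y" for Y
  proof -
    define X where "X = {v \<in> V. Inl v \<in> Y}"
    define A where "A = {e \<in> E. e \<inter> X = {}}"
    define W where "W = Inr -` Y"
    have cutE: "\<And>e. e \<in> E \<Longrightarrow> card (Y \<inter> expansion_edge k e) = 1"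
      using Y(2) unfolding one_cross_cut_def expansion_def by auto
    have "independent E X" unfolding independent_def
    proof (intro ballI notI)
      fix e assume e: "e \<in> E" "e \<subseteq> X"
      obtain a b where ab: "e = {a, b}" "a \<noteq> b" using Esub[OF e(1)] card_2_iff by metis
      have "{Inl a, Inl b} \<subseteq> Y \<inter> expansion_edge k e"
        using e ab unfolding X_def expansion_edge_def by auto
      hence "card {Inl a, Inl b :: 'a + 'a set \<times> nat} \<le> card (Y \<inter> expansion_edge k e)"
        using Y(1) by (intro card_mono) auto
      thus False using cutE[OF e(1)] ab(2) by simp
    qed
    hence XD: "X \<in> D" unfolding D_def X_def by auto
    have finW: "finite W" unfolding W_def using Y(1) by (auto intro: finite_vimageI simp: inj_on_def)
    have AW: "A \<subseteq> fst ` W"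
    proof
      fix e assume eA: "e \<in> A"
      hence e: "e \<in> E" "e \<inter> X = {}" unfolding A_def by auto
      have "Y \<inter> expansion_edge k e \<noteq> {}" using cutE[OF e(1)] by force
      then obtain y where y: "y \<in> Y" "y \<in> expansion_edge k e" by auto
      show "e \<in> fst ` W"
      proof (cases y)
        case (Inl v)
        hence "v \<in> e" using y(2) unfolding expansion_edge_def by auto
        hence "v \<in> X" using Esub[OF e(1)] y(1) Inl unfolding X_def by auto
        thus ?thesis using e(2) \<open>v \<in> e\<close> by auto
      next
        case (Inr p)
        hence "fst p = e" using y(2) unfolding expansion_edge_def by auto
        moreover have "p \<in> W" using y(1) Inr unfolding W_def by auto
        ultimately show ?thesis by force
      qed
    qed
    have "card A \<le> card W"
      using AW finW by (meson card_image_le card_mono finite_imageI order_trans)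
    moreover have "card X \<le> card (Inl -` Y)"
      using Y(1) by (intro card_mono) (auto intro: finite_vimageI simp: inj_on_def X_def)
    ultimately have "f X \<le> card Y"
      using card_Y_split[OF Y(1)] unfolding f_def edges_del_def A_def W_def by simp
    thus ?thesis using sig_le[OF XD] by simp
  qed
  have le2: "enat (sigma V E) \<le> tau1 (expansion k E)"
    unfolding tau1_def by (rule INF_greatest) (use lb in auto)
  show ?thesis using le1 le2 by simp
qed

end
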